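(* Let $\mathcal{B}=(X,P,B)$ be an ordinal ballean. Then $\mathcal{B}$ is either metrizable or cellular.
   Context: A ball structure is a triple $\mathcal{B}=(X,P,B)$ where $X,P$ are non-empty sets and for all $x\in X$, $\alpha\in P$, $B(x,\alpha)\subseteq X$ with $x\in B(x,\alpha)$ (the ball of radius $\alpha$ around $x$). Put $B^*(x,\alpha)=\{y\in X: x\in B(y,\alpha)\}$ and $B(A,\alpha)=\bigcup_{a\in A}B(a,\alpha)$ for $A\subseteq X$. A ball structure is a ballean if (1) for all $\alpha,\beta\in P$ there are $\alpha',\beta'\in P$ with $B(x,\alpha)\subseteq B^*(x,\alpha')$ and $B^*(x,\beta)\subseteq B(x,\beta')$ for all $x\in X$; and (2) for all $\alpha,\beta\in P$ there is $\gamma\in P$ with $B(B(x,\alpha),\beta)\subseteq B(x,\gamma)$ for all $x\in X$. For balleans $\mathcal{B}_1=(X_1,P_1,B_1)$, $\mathcal{B}_2=(X_2,P_2,B_2)$, a map $f:X_1\to X_2$ is a $\prec$-mapping if for every $\alpha\in P_1$ there is $\beta\in P_2$ with $f(B_1(x,\alpha))\subseteq B_2(f(x),\beta)$ for all $x\in X_1$; a bijection $f$ is an asymorphism if $f$ and $f^{-1}$ are $\prec$-mappings, and then the balleans are asymorphic. Two balleans on the same set are identified ($\mathcal{B}_1=\mathcal{B}_2$) if the identity map is an asymorphism. A metric space $(X,d)$ gives the metric ballean $(X,\mathbb{R}^+,B_d)$ with $B_d(x,r)=\{y: d(x,y)\le r\}$; a ballean is metrizable if it is asymorphic to some metric ballean.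 A ballean is connected if for all $x,y\in X$ there is $\alpha\in P$ with $y\in B(x,\alpha)$. Preorder $P$ by $\alpha\le\beta$ iff $B(x,\alpha)\subseteq B(x,\beta)$ for all $x\in X$. A connected ballean is ordinal if $P$ has a cofinal subset (i.e. a subset $P'$ such that every $\alpha\in P$ is $\le$ some element of $P'$) which is well-ordered by $\le$. For $\alpha\in P$, points $x,y$ are $\alpha$-path connected if there are $x=x_0,x_1,\dots,x_n=y$ with $x_{i+1}\in B(x_i,\alpha)$ for all $i$; let $B^{\Box}(x,\alpha)=\{y: x,y \text{ are } \alpha\text{-path connected}\}$. The cellularization is $\mathcal{B}^{\Box}=(X,P,B^{\Box})$, and $\mathcal{B}$ is cellular if $\mathcal{B}^{\Box}=\mathcal{B}$ (i.e. the identity map is an asymorphism between them). *)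

theory Defs
  imports Complex_Main
begin

definition ball_structure :: "'a set \<Rightarrow> 'p set \<Rightarrow> ('a \<Rightarrow> 'p \<Rightarrow> 'a set) \<Rightarrow> bool" where
  "ball_structure X P B \<longleftrightarrow> X \<noteq> {} \<and> P \<noteq> {} \<and>
     (\<forall>x\<in>X. \<forall>\<alpha>\<in>P. B x \<alpha> \<subseteq> X \<and> x \<in> B x \<alpha>)"

definition dual_ball :: "'a set \<Rightarrow> ('a \<Rightarrow> 'p \<Rightarrow> 'a set) \<Rightarrow> 'a \<Rightarrow> 'p \<Rightarrow> 'a set" where
  "dual_ball X B x \<alpha> = {y \<in> X. x \<in> B y \<alpha>}"

definition ball_of_set :: "('a \<Rightarrow> 'p \<Rightarrow> 'a set) \<Rightarrow> 'a set \<Rightarrow> 'p \<Rightarrow> 'a set" where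
  "ball_of_set B A \<alpha> = (\<Union>a\<in>A. B a \<alpha>)"

definition ballean :: "'a set \<Rightarrow> 'p set \<Rightarrow> ('a \<Rightarrow> 'p \<Rightarrow> 'a set) \<Rightarrow> bool" where
  "ballean X P B \<longleftrightarrow> ball_structure X P B \<and>
     (\<forall>\<alpha>\<in>P. \<forall>\<beta>\<in>P. \<exists>\<alpha>'\<in>P. \<exists>\<beta>'\<in>P. \<forall>x\<in>X.
        B x \<alpha> \<subseteq> dual_ball X B x \<alpha>' \<and> dual_ball X B x \<beta> \<subseteq> B x \<beta>') \<and>
     (\<forall>\<alpha>\<in>P. \<forall>\<beta>\<in>P. \<exists>\<gamma>\<in>P. \<forall>x\<in>X. ball_of_set B (B x \<alpha>) \<beta> \<subseteq> B x \<gamma>)"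

definition prec_mapping ::
  "'a set \<Rightarrow> 'p set \<Rightarrow> ('a \<Rightarrow> 'p \<Rightarrow> 'a set) \<Rightarrow>
   'b set \<Rightarrow> 'q set \<Rightarrow> ('b \<Rightarrow> 'q \<Rightarrow> 'b set) \<Rightarrow> ('a \<Rightarrow> 'b) \<Rightarrow> bool" where
  "prec_mapping X1 P1 B1 X2 P2 B2 f \<longleftrightarrow>
     (\<forall>\<alpha>\<in>P1. \<exists>\<beta>\<in>P2. \<forall>x\<in>X1. f ` B1 x \<alpha> \<subseteq> B2 (f x) \<beta>)"

definition asymorphism ::
  "'a set \<Rightarrow> 'p set \<Rightarrow> ('a \<Rightarrow> 'p \<Rightarrow> 'a set) \<Rightarrow>
   'b set \<Rightarrow> 'q set \<Rightarrow> ('b \<Rightarrow> 'q \<Rightarrow> 'b set) \<Rightarrow> ('a \<Rightarrow> 'b) \<Rightarrow> bool" where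
  "asymorphism X1 P1 B1 X2 P2 B2 f \<longleftrightarrow> bij_betw f X1 X2 \<and>
     prec_mapping X1 P1 B1 X2 P2 B2 f \<and>
     prec_mapping X2 P2 B2 X1 P1 B1 (inv_into X1 f)"

definition metric_on :: "'a set \<Rightarrow> ('a \<Rightarrow> 'a \<Rightarrow> real) \<Rightarrow> bool" where
  "metric_on X d \<longleftrightarrow> (\<forall>x\<in>X. \<forall>y\<in>X. 0 \<le> d x y \<and> (d x y = 0 \<longleftrightarrow> x = y) \<and> d x y = d y x) \<and>
     (\<forall>x\<in>X. \<forall>y\<in>X. \<forall>z\<in>X. d x z \<le> d x y + d y z)"

definition metric_ball :: "'a set \<Rightarrow> ('a \<Rightarrow> 'a \<Rightarrow> real) \<Rightarrow> 'a \<Rightarrow> real \<Rightarrow> 'a set" where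
  "metric_ball X d x r = {y \<in> X. d x y \<le> r}"

abbreviation nonneg_reals :: "real set" where
  "nonneg_reals \<equiv> {r. 0 \<le> r}"

(* Asymorphic to some metric ballean; the metric space is taken on a type 'b chosen
   by the caller (in the theorem we take it on the carrier type itself, which loses
   no generality since any metric space can be transported along a bijection). *)
definition metrizable_on :: "'b itself \<Rightarrow> 'a set \<Rightarrow> 'p set \<Rightarrow> ('a \<Rightarrow> 'p \<Rightarrow> 'a set) \<Rightarrow> bool" where
  "metrizable_on _ X P B \<longleftrightarrow> (\<exists>(Y::'b set) d f. metric_on Y d \<and>
      asymorphism X P B Y nonneg_reals (metric_ball Y d) f)"

abbreviation metrizable :: "'a set \<Rightarrow> 'p set \<Rightarrow> ('a \<Rightarrow> 'p \<Rightarrow> 'a set) \<Rightarrow> bool" where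
  "metrizable X P B \<equiv> metrizable_on TYPE('a) X P B"

definition connected_ballean :: "'a set \<Rightarrow> 'p set \<Rightarrow> ('a \<Rightarrow> 'p \<Rightarrow> 'a set) \<Rightarrow> bool" where
  "connected_ballean X P B \<longleftrightarrow> (\<forall>x\<in>X. \<forall>y\<in>X. \<exists>\<alpha>\<in>P. y \<in> B x \<alpha>)"

definition radius_le :: "'a set \<Rightarrow> ('a \<Rightarrow> 'p \<Rightarrow> 'a set) \<Rightarrow> 'p \<Rightarrow> 'p \<Rightarrow> bool" where
  "radius_le X B \<alpha> \<beta> \<longleftrightarrow> (\<forall>x\<in>X. B x \<alpha> \<subseteq> B x \<beta>)"

definition ordinal_ballean :: "'a set \<Rightarrow> 'p set \<Rightarrow> ('a \<Rightarrow> 'p \<Rightarrow> 'a set) \<Rightarrow> bool" where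
  "ordinal_ballean X P B \<longleftrightarrow> connected_ballean X P B \<and>
     (\<exists>P' \<subseteq> P. (\<forall>\<alpha>\<in>P. \<exists>\<beta>\<in>P'. radius_le X B \<alpha> \<beta>) \<and>
        well_order_on P' {(\<alpha>, \<beta>). \<alpha> \<in> P' \<and> \<beta> \<in> P' \<and> radius_le X B \<alpha> \<beta>})"

definition cell_ball :: "'a set \<Rightarrow> ('a \<Rightarrow> 'p \<Rightarrow> 'a set) \<Rightarrow> 'a \<Rightarrow> 'p \<Rightarrow> 'a set" where
  "cell_ball X B x \<alpha> = {y. (\<lambda>u v. u \<in> X \<and> v \<in> B u \<alpha>)\<^sup>*\<^sup>* x y}"

definition cellular :: "'a set \<Rightarrow> 'p set \<Rightarrow> ('a \<Rightarrow> 'p \<Rightarrow> 'a set) \<Rightarrow> bool" where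
  "cellular X P B \<longleftrightarrow> asymorphism X P (cell_ball X B) X P B id"

end

theory Submission
  imports Defs
begin

definition symb :: "'a set \<Rightarrow> ('a \<Rightarrow> 'p \<Rightarrow> 'a set) \<Rightarrow> 'a \<Rightarrow> 'p \<Rightarrow> 'a set" where
  "symb X B x a = B x a \<union> dual_ball X B x a"

lemma rl_refl: "radius_le X B a a" by (simp add: radius_le_def)
lemma rl_trans: "radius_le X B a b \<Longrightarrow> radius_le X B b c \<Longrightarrow> radius_le X B a c"
  by (auto simp: radius_le_def)

lemma bsl: "ballean X P B \<Longrightarrow> \<forall>x\<in>X. \<forall>c\<in>P. B x c \<subseteq> X \<and> x \<in> B x c"
  unfolding ballean_def ball_structure_def by (elim conjE) assumption
lemma ax1: "ballean X P B \<Longrightarrow> \<forall>\<alpha>\<in>P. \<forall>\<beta>\<in>P. \<exists>\<alpha>'\<in>P. \<exists>\<beta>'\<in>P. \<forall>x\<in>X.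
        B x \<alpha> \<subseteq> dual_ball X B x \<alpha>' \<and> dual_ball X B x \<beta> \<subseteq> B x \<beta>'"
  unfolding ballean_def by (elim conjE) assumption
lemma ax2: "ballean X P B \<Longrightarrow> \<forall>\<alpha>\<in>P. \<forall>\<beta>\<in>P. \<exists>\<gamma>\<in>P. \<forall>x\<in>X. ball_of_set B (B x \<alpha>) \<beta> \<subseteq> B x \<gamma>"
  unfolding ballean_def by (elim conjE) assumption
lemma tot: "well_order_on P' r \<Longrightarrow> total_on P' r"
  unfolding well_order_on_def linear_order_on_def by (elim conjE) assumption

lemma upper:
  assumes "ballean X P B" "a \<in> P" "b \<in> P"
  shows "\<exists>g\<in>P. radius_le X B a g \<and> radius_le X B b g \<and> (\<forall>x\<in>X. ball_of_set B (B x a) b \<subseteq> B x g)"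
proof -
  obtain g where g: "g \<in> P" "\<forall>x\<in>X. ball_of_set B (B x a) b \<subseteq> B x g"
    using ax2[OF assms(1)] assms(2,3) by blast
  have bs: "\<forall>x\<in>X. \<forall>c\<in>P. B x c \<subseteq> X \<and> x \<in> B x c"
    using bsl[OF assms(1)] .
  have "radius_le X B a g"
    unfolding radius_le_def
  proof (intro ballI subsetI)
    fix x y assume "x \<in> X" "y \<in> B x a"
    then have "y \<in> X" using bs assms by blast
    then have "y \<in> B y b" using bs assms by blast
    then show "y \<in> B x g" using g \<open>x \<in> X\<close> \<open>y \<in> B x a\<close> unfolding ball_of_set_def by blast
  qed
  moreover have "radius_le X B b g"
    unfolding radius_le_def
  proof (intro ballI subsetI)
    fix x y assume "x \<in> X" "y \<in> B x b"
    have "x \<in> B x a" using bs assms \<open>x \<in> X\<close> by blast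
    then show "y \<in> B x g" using g \<open>x \<in> X\<close> \<open>y \<in> B x b\<close> unfolding ball_of_set_def by blast
  qed
  ultimately show ?thesis using g by blast
qed

lemma symb_bound:
  assumes "ballean X P B" "a \<in> P"
  shows "\<exists>g\<in>P. \<forall>x\<in>X. symb X B x a \<subseteq> B x g"
proof -
  obtain b' where b': "b' \<in> P" "\<forall>x\<in>X. dual_ball X B x a \<subseteq> B x b'"
    using ax1[OF assms(1)] assms(2) by blast
  obtain g where g: "g \<in> P" "radius_le X B a g" "radius_le X B b' g"
    using upper[OF assms(1) assms(2) b'(1)] by blast
  show ?thesis using g b' unfolding symb_def radius_le_def by blast
qed

lemma step_bound:
  assumes "ballean X P B" "a \<in> P" "d \<in> P"
  shows "\<exists>g\<in>P. radius_le X B a g \<and> radius_le X B d g \<and>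
     (\<forall>x\<in>X. \<forall>y\<in>symb X B x d. \<forall>z\<in>symb X B y d. z \<in> B x g)"
proof -
  obtain e where e: "e \<in> P" "\<forall>x\<in>X. symb X B x d \<subseteq> B x e"
    using symb_bound[OF assms(1,3)] by blast
  obtain g1 where g1: "g1 \<in> P" "\<forall>x\<in>X. ball_of_set B (B x e) e \<subseteq> B x g1"
    using upper[OF assms(1) e(1) e(1)] by blast
  obtain g2 where g2: "g2 \<in> P" "radius_le X B g1 g2" "radius_le X B a g2"
    using upper[OF assms(1) g1(1) assms(2)] by blast
  obtain g where g: "g \<in> P" "radius_le X B g2 g" "radius_le X B d g"
    using upper[OF assms(1) g2(1) assms(3)] by blast
  have sX: "\<forall>x\<in>X. symb X B x d \<subseteq> X"
    using bsl[OF assms(1)] assms(3) unfolding symb_def dual_ball_def by blast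
  have "\<forall>x\<in>X. \<forall>y\<in>symb X B x d. \<forall>z\<in>symb X B y d. z \<in> B x g"
  proof (intro ballI)
    fix x y z assume x: "x \<in> X" and y: "y \<in> symb X B x d" and z: "z \<in> symb X B y d"
    have "y \<in> X" using sX x y by blast
    have "z \<in> B y e" using e \<open>y \<in> X\<close> z by blast
    moreover have "y \<in> B x e" using e x y by blast
    ultimately have "z \<in> B x g1" using g1 x unfolding ball_of_set_def by blast
    then have "z \<in> B x g2" using g2(2) x unfolding radius_le_def by blast
    then show "z \<in> B x g" using g(2) x unfolding radius_le_def by blast
  qed
  moreover have "radius_le X B a g" by (rule rl_trans[OF g2(3) g(2)])
  ultimately show ?thesis using g(1,3) by blast
qed

lemma symb_mono:
  "radius_le X B a b \<Longrightarrow> x \<in> X \<Longrightarrow> symb X B x a \<subseteq> symb X B x b"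
  unfolding symb_def dual_ball_def radius_le_def by blast

lemma symb_sym:
  "x \<in> X \<Longrightarrow> y \<in> X \<Longrightarrow> y \<in> symb X B x a \<longleftrightarrow> x \<in> symb X B y a"
  unfolding symb_def dual_ball_def by blast

lemma total_P':
  assumes "well_order_on P' {(\<alpha>, \<beta>). \<alpha> \<in> P' \<and> \<beta> \<in> P' \<and> radius_le X B \<alpha> \<beta>}"
    "a \<in> P'" "b \<in> P'"
  shows "radius_le X B a b \<or> radius_le X B b a"
proof (cases "a = b")
  case True then show ?thesis by (simp add: rl_refl)
next
  case False
  have "total_on P' {(\<alpha>, \<beta>). \<alpha> \<in> P' \<and> \<beta> \<in> P' \<and> radius_le X B \<alpha> \<beta>}"
    using tot[OF assms(1)] .
  then have "(a, b) \<in> {(\<alpha>, \<beta>). \<alpha> \<in> P' \<and> \<beta> \<in> P' \<and> radius_le X B \<alpha> \<beta>} \<or>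
             (b, a) \<in> {(\<alpha>, \<beta>). \<alpha> \<in> P' \<and> \<beta> \<in> P' \<and> radius_le X B \<alpha> \<beta>}"
    using assms(2,3) False unfolding total_on_def by blast
  then show ?thesis by blast
qed

lemma metr_case:
  fixes s :: "nat \<Rightarrow> 'p" and X :: "'a set" and P :: "'p set"
  assumes bl: "ballean X P B" and con: "connected_ballean X P B"
    and sP: "\<forall>k. s k \<in> P" and cof: "\<forall>a\<in>P. \<exists>k. radius_le X B a (s k)"
  shows "metrizable X P B"
proof -
  let ?Q = "\<lambda>n d g. g \<in> P \<and> radius_le X B (s (Suc n)) g \<and> radius_le X B d g \<and>
     (\<forall>x\<in>X. \<forall>y\<in>symb X B x d. \<forall>z\<in>symb X B y d. z \<in> B x g)"
  define \<delta> where "\<delta> = rec_nat (s 0) (\<lambda>n d. SOME g. ?Q n d g)"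
  have d0: "\<delta> 0 = s 0" unfolding \<delta>_def by simp
  have dS: "\<delta> (Suc n) = (SOME g. ?Q n (\<delta> n) g)" for n unfolding \<delta>_def by simp
  have dP: "\<delta> n \<in> P \<and> ?Q n (\<delta> n) (\<delta> (Suc n))" for n
  proof (induction n)
    case 0
    have a: "\<delta> 0 \<in> P" using d0 sP by simp
    have e: "\<exists>g. ?Q 0 (\<delta> 0) g" using step_bound[OF bl sP[rule_format, of "Suc 0"] a] by blast
    have "?Q 0 (\<delta> 0) (\<delta> (Suc 0))" unfolding dS[of 0] by (rule someI_ex[OF e])
    with a show ?case by (rule conjI)
  next
    case (Suc n)
    then have a: "\<delta> (Suc n) \<in> P" by blast
    have e: "\<exists>g. ?Q (Suc n) (\<delta> (Suc n)) g"
      using step_bound[OF bl sP[rule_format, of "Suc (Suc n)"] a] by blast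
    have "?Q (Suc n) (\<delta> (Suc n)) (\<delta> (Suc (Suc n)))" unfolding dS[of "Suc n"] by (rule someI_ex[OF e])
    with a show ?case by (rule conjI)
  qed
  have dPn: "\<delta> n \<in> P" for n using dP by blast
  have Q: "?Q n (\<delta> n) (\<delta> (Suc n))" for n using dP by blast
  have Qs: "radius_le X B (s (Suc n)) (\<delta> (Suc n))" for n
    using conjunct1[OF conjunct2[OF Q[of n]]] .
  have Qd: "radius_le X B (\<delta> n) (\<delta> (Suc n))" for n
    using conjunct1[OF conjunct2[OF conjunct2[OF Q[of n]]]] .
  have Qc: "\<forall>x\<in>X. \<forall>y\<in>symb X B x (\<delta> n). \<forall>z\<in>symb X B y (\<delta> n). z \<in> B x (\<delta> (Suc n))" for n
    using conjunct2[OF conjunct2[OF conjunct2[OF Q[of n]]]] .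
  have sd: "radius_le X B (s n) (\<delta> n)" for n
  proof (cases n)
    case 0 then show ?thesis by (simp add: d0 rl_refl)
  next
    case (Suc m) then show ?thesis using Qs[of m] by simp
  qed
  have mono: "m \<le> n \<Longrightarrow> radius_le X B (\<delta> m) (\<delta> n)" for m n
  proof (induction n rule: dec_induct)
    case base then show ?case by (rule rl_refl)
  next
    case (step n) then show ?case using rl_trans[OF _ Qd[of n]] by simp
  qed
  have bs: "\<forall>x\<in>X. \<forall>c\<in>P. B x c \<subseteq> X \<and> x \<in> B x c"
    using bsl[OF bl] .
  have ex: "\<exists>n. y \<in> symb X B x (\<delta> n)" if "x \<in> X" "y \<in> X" for x y
  proof -
    have "\<exists>a\<in>P. y \<in> B x a" using con that unfolding connected_ballean_def by blast
    then obtain a where a: "a \<in> P" "y \<in> B x a" by blast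
    obtain k where "radius_le X B a (s k)" using cof a by blast
    then have "radius_le X B a (\<delta> k)" by (rule rl_trans[OF _ sd])
    then have "y \<in> B x (\<delta> k)" using a(2) that(1) unfolding radius_le_def by blast
    then show ?thesis unfolding symb_def by blast
  qed
  define D where "D x y = (LEAST n. y \<in> symb X B x (\<delta> n))" for x y
  define d where "d x y = (if x = y then 0 else real (Suc (D x y)))" for x y
  have DI: "y \<in> symb X B x (\<delta> (D x y))" if "x \<in> X" "y \<in> X" for x y
    unfolding D_def using LeastI_ex[OF ex[OF that]] .
  have Dle: "y \<in> symb X B x (\<delta> n) \<Longrightarrow> D x y \<le> n" for x y n
    unfolding D_def by (rule Least_le)
  have Dsym: "D x y = D y x" if "x \<in> X" "y \<in> X" for x y
  proof -
    have "(\<lambda>n. y \<in> symb X B x (\<delta> n)) = (\<lambda>n. x \<in> symb X B y (\<delta> n))"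
      by (intro ext) (rule symb_sym[OF that])
    then show ?thesis unfolding D_def by (simp only:)
  qed
  have tri: "d x z \<le> d x y + d y z" if xyz: "x \<in> X" "y \<in> X" "z \<in> X" for x y z
  proof -
    consider "x = z" | "x = y" | "y = z" | "x \<noteq> z" "x \<noteq> y" "y \<noteq> z" by blast
    then show ?thesis
    proof cases
      case 1 then show ?thesis by (simp add: d_def)
    next
      case 2 then show ?thesis by (simp add: d_def)
    next
      case 3 then show ?thesis by (simp add: d_def)
    next
      case 4
      let ?m = "max (D x y) (D y z)"
      have "y \<in> symb X B x (\<delta> ?m)"
        using DI[of x y] xyz symb_mono[OF mono[of "D x y" ?m]] by auto
      moreover have "z \<in> symb X B y (\<delta> ?m)"
        using DI[of y z] xyz symb_mono[OF mono[of "D y z" ?m]] by auto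
      ultimately have "z \<in> B x (\<delta> (Suc ?m))" using Qc[of ?m] xyz by blast
      then have "z \<in> symb X B x (\<delta> (Suc ?m))" unfolding symb_def by blast
      then have "D x z \<le> Suc ?m" by (rule Dle)
      then show ?thesis using 4 by (simp add: d_def)
    qed
  qed
  have met: "metric_on X d"
    unfolding metric_on_def
  proof (intro conjI ballI)
    fix x y assume "x \<in> X" "y \<in> X"
    show "0 \<le> d x y" by (simp add: d_def)
    show "(d x y = 0) = (x = y)" by (simp add: d_def)
    show "d x y = d y x" using Dsym[OF \<open>x \<in> X\<close> \<open>y \<in> X\<close>] by (simp add: d_def)
  next
    fix x y z assume "x \<in> X" "y \<in> X" "z \<in> X"
    then show "d x z \<le> d x y + d y z" by (rule tri)
  qed
  have invid: "inv_into X id y = y" if "y \<in> X" for y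
    using inv_into_f_f[of id X y] that by simp
  have p1: "prec_mapping X P B X nonneg_reals (metric_ball X d) id"
    unfolding prec_mapping_def
  proof
    fix a assume a: "a \<in> P"
    obtain k where k: "radius_le X B a (s k)" using cof a by blast
    then have ak: "radius_le X B a (\<delta> k)" by (rule rl_trans[OF _ sd])
    have "\<forall>x\<in>X. id ` B x a \<subseteq> metric_ball X d (id x) (real (Suc k))"
    proof (intro ballI subsetI)
      fix x y assume x: "x \<in> X" and "y \<in> id ` B x a"
      then have y: "y \<in> B x a" by simp
      then have yX: "y \<in> X" using bs a x by blast
      have "y \<in> symb X B x (\<delta> k)" using ak y x unfolding radius_le_def symb_def by blast
      then have "D x y \<le> k" by (rule Dle)
      then show "y \<in> metric_ball X d (id x) (real (Suc k))"
        using yX unfolding metric_ball_def d_def by auto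
    qed
    moreover have "real (Suc k) \<in> nonneg_reals" by simp
    ultimately show "\<exists>b\<in>nonneg_reals. \<forall>x\<in>X. id ` B x a \<subseteq> metric_ball X d (id x) b" by (rule bexI)
  qed
  have p2: "prec_mapping X nonneg_reals (metric_ball X d) X P B (inv_into X id)"
    unfolding prec_mapping_def
  proof
    fix r :: real assume "r \<in> nonneg_reals"
    then have r: "0 \<le> r" by simp
    define N where "N = nat \<lceil>r\<rceil>"
    have rN: "r \<le> real N" unfolding N_def using r by linarith
    obtain g where g: "g \<in> P" "\<forall>x\<in>X. symb X B x (\<delta> N) \<subseteq> B x g"
      using symb_bound[OF bl dPn[of N]] by blast
    have "\<forall>x\<in>X. inv_into X id ` metric_ball X d x r \<subseteq> B (inv_into X id x) g"
    proof (intro ballI subsetI)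
      fix x y assume x: "x \<in> X" and "y \<in> inv_into X id ` metric_ball X d x r"
      then obtain w where w: "w \<in> X" "d x w \<le> r" "y = inv_into X id w"
        unfolding metric_ball_def by blast
      then have yw: "y = w" using invid by simp
      have "w \<in> B x g"
      proof (cases "w = x")
        case True then show ?thesis using bs g x by blast
      next
        case False
        then have "real (Suc (D x w)) \<le> real N" using w rN by (simp add: d_def)
        then have "D x w \<le> N" by simp
        then have "w \<in> symb X B x (\<delta> N)" using DI[OF x w(1)] symb_mono[OF mono x] by blast
        then show ?thesis using g x by blast
      qed
      then show "y \<in> B (inv_into X id x) g" using yw invid x by simp
    qed
    then show "\<exists>b\<in>P. \<forall>x\<in>X. inv_into X id ` metric_ball X d x r \<subseteq> B (inv_into X id x) b"
      using g by blast
  qed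
  have "asymorphism X P B X nonneg_reals (metric_ball X d) id"
    unfolding asymorphism_def using p1 p2 by simp
  then show ?thesis unfolding metrizable_on_def using met by blast
qed


lemma cell_case:
  fixes X :: "'a set" and P :: "'p set" and B :: "'a \<Rightarrow> 'p \<Rightarrow> 'a set"
  assumes bl: "ballean X P B" and PP: "P' \<subseteq> P"
    and cofP: "\<forall>a\<in>P. \<exists>b\<in>P'. radius_le X B a b"
    and wo: "well_order_on P' {(\<alpha>, \<beta>). \<alpha> \<in> P' \<and> \<beta> \<in> P' \<and> radius_le X B \<alpha> \<beta>}"
    and notA: "\<not> (\<exists>s::nat \<Rightarrow> 'p. (\<forall>k. s k \<in> P) \<and> (\<forall>a\<in>P. \<exists>k. radius_le X B a (s k)))"
  shows "cellular X P B"
proof -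
  have bs: "\<forall>x\<in>X. \<forall>c\<in>P. B x c \<subseteq> X \<and> x \<in> B x c"
    using bsl[OF bl] .
  have invid: "inv_into X id y = y" if "y \<in> X" for y
    using inv_into_f_f[of id X y] that by simp
  have p2: "prec_mapping X P B X P (cell_ball X B) (inv_into X id)"
    unfolding prec_mapping_def
  proof
    fix a assume a: "a \<in> P"
    have "\<forall>x\<in>X. inv_into X id ` B x a \<subseteq> cell_ball X B (inv_into X id x) a"
    proof (intro ballI subsetI)
      fix x y assume x: "x \<in> X" and "y \<in> inv_into X id ` B x a"
      then obtain w where w: "w \<in> B x a" "y = inv_into X id w" by blast
      have "w \<in> X" using bs a x w(1) by blast
      then have yw: "y = w" using w(2) invid by simp
      have "(\<lambda>u v. u \<in> X \<and> v \<in> B u a)\<^sup>*\<^sup>* x w"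
        by (rule r_into_rtranclp) (use x w(1) in blast)
      then show "y \<in> cell_ball X B (inv_into X id x) a"
        unfolding cell_ball_def using yw invid[OF x] by simp
    qed
    then show "\<exists>b\<in>P. \<forall>x\<in>X. inv_into X id ` B x a \<subseteq> cell_ball X B (inv_into X id x) b"
      using a by blast
  qed
  have p1: "prec_mapping X P (cell_ball X B) X P B id"
    unfolding prec_mapping_def
  proof
    fix a assume a: "a \<in> P"
    let ?R = "\<lambda>b g. g \<in> P' \<and> (\<forall>x\<in>X. ball_of_set B (B x b) b \<subseteq> B x g) \<and>
        radius_le X B b g \<and> radius_le X B a g"
    have stp: "\<exists>g. ?R b g" if b: "b \<in> P" for b
    proof -
      obtain g1 where g1: "g1 \<in> P" "radius_le X B b g1" "\<forall>x\<in>X. ball_of_set B (B x b) b \<subseteq> B x g1"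
        using upper[OF bl b b] by blast
      obtain g2 where g2: "g2 \<in> P" "radius_le X B g1 g2" "radius_le X B a g2"
        using upper[OF bl g1(1) a] by blast
      obtain g where g: "g \<in> P'" "radius_le X B g2 g" using cofP g2(1) by blast
      have "radius_le X B g1 g" by (rule rl_trans[OF g2(2) g(2)])
      then have r1: "radius_le X B b g" by (rule rl_trans[OF g1(2)])
      have r2: "radius_le X B a g" by (rule rl_trans[OF g2(3) g(2)])
      have "\<forall>x\<in>X. ball_of_set B (B x b) b \<subseteq> B x g"
        using g1(3) \<open>radius_le X B g1 g\<close> unfolding radius_le_def by blast
      then show ?thesis using g(1) r1 r2 by blast
    qed
    define \<beta> where "\<beta> = rec_nat a (\<lambda>n b. SOME g. ?R b g)"
    have b0: "\<beta> 0 = a" unfolding \<beta>_def by simp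
    have bS: "\<beta> (Suc n) = (SOME g. ?R (\<beta> n) g)" for n unfolding \<beta>_def by simp
    have bP: "\<beta> n \<in> P" for n
    proof (induction n)
      case 0 then show ?case using a b0 by simp
    next
      case (Suc n)
      have "?R (\<beta> n) (\<beta> (Suc n))" unfolding bS by (rule someI_ex[OF stp[OF Suc]])
      then show ?case using PP by blast
    qed
    have R: "?R (\<beta> n) (\<beta> (Suc n))" for n unfolding bS by (rule someI_ex[OF stp[OF bP]])
    have RP: "\<beta> (Suc n) \<in> P'" for n using R[of n] by blast
    have Rb: "\<forall>x\<in>X. ball_of_set B (B x (\<beta> n)) (\<beta> n) \<subseteq> B x (\<beta> (Suc n))" for n
      using R[of n] by blast
    have Rm: "radius_le X B (\<beta> n) (\<beta> (Suc n))" for n using R[of n] by blast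
    have Ra: "radius_le X B a (\<beta> n)" for n
    proof (cases n)
      case 0 then show ?thesis by (simp add: b0 rl_refl)
    next
      case (Suc m) then show ?thesis using R[of m] by blast
    qed
    have nA: "\<not> ((\<forall>k. \<beta> k \<in> P) \<and> (\<forall>a\<in>P. \<exists>k. radius_le X B a (\<beta> k)))"
      using notA[unfolded not_ex, rule_format, of \<beta>] .
    have "\<not> (\<forall>a\<in>P. \<exists>k. radius_le X B a (\<beta> k))" using nA bP by blast
    then obtain b where b: "b \<in> P" "\<forall>k. \<not> radius_le X B b (\<beta> k)" by blast
    obtain b' where b': "b' \<in> P'" "radius_le X B b b'" using cofP b(1) by blast
    have above1: "radius_le X B (\<beta> (Suc k)) b'" for k
    proof -
      have "radius_le X B (\<beta> (Suc k)) b' \<or> radius_le X B b' (\<beta> (Suc k))"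
        by (rule total_P'[OF wo RP b'(1)])
      moreover have "\<not> radius_le X B b' (\<beta> (Suc k))"
      proof
        assume "radius_le X B b' (\<beta> (Suc k))"
        then have "radius_le X B b (\<beta> (Suc k))" by (rule rl_trans[OF b'(2)])
        then show False using b(2) by blast
      qed
      ultimately show ?thesis by blast
    qed
    have above: "radius_le X B (\<beta> k) b'" for k
    proof (cases k)
      case 0
      have "radius_le X B (\<beta> 0) (\<beta> (Suc 0))" by (rule Rm)
      then show ?thesis using 0 rl_trans[OF _ above1[of 0]] by blast
    next
      case (Suc m) then show ?thesis using above1[of m] by simp
    qed
    have reach: "\<exists>k. y \<in> B x (\<beta> k)"
      if x: "x \<in> X" and r: "(\<lambda>u v. u \<in> X \<and> v \<in> B u a)\<^sup>*\<^sup>* x y" for x y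
      using r
    proof (induction rule: rtranclp_induct)
      case base
      have "x \<in> B x (\<beta> 0)" using bs x bP[of 0] by blast
      then show ?case by blast
    next
      case (step y z)
      from step.IH obtain k where k: "y \<in> B x (\<beta> k)" by blast
      from step.hyps(2) have yX: "y \<in> X" and z: "z \<in> B y a" by auto
      have "z \<in> B y (\<beta> k)" using Ra[of k] yX z unfolding radius_le_def by blast
      then have "z \<in> ball_of_set B (B x (\<beta> k)) (\<beta> k)" using k unfolding ball_of_set_def by blast
      then have "z \<in> B x (\<beta> (Suc k))" using Rb[of k] x by blast
      then show ?case by blast
    qed
    have "\<forall>x\<in>X. id ` cell_ball X B x a \<subseteq> B (id x) b'"
    proof (intro ballI subsetI)
      fix x y assume x: "x \<in> X" and "y \<in> id ` cell_ball X B x a"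
      then have "(\<lambda>u v. u \<in> X \<and> v \<in> B u a)\<^sup>*\<^sup>* x y" unfolding cell_ball_def by simp
      then obtain k where "y \<in> B x (\<beta> k)" using reach[OF x] by blast
      then show "y \<in> B (id x) b'" using above[of k] x unfolding radius_le_def by auto
    qed
    then show "\<exists>b\<in>P. \<forall>x\<in>X. id ` cell_ball X B x a \<subseteq> B (id x) b" using b'(1) PP by blast
  qed
  show ?thesis unfolding cellular_def asymorphism_def using p1 p2 by simp
qed

theorem theorem1:
  fixes X :: "'a set" and P :: "'p set" and B :: "'a \<Rightarrow> 'p \<Rightarrow> 'a set"
  assumes "ballean X P B" and "ordinal_ballean X P B"
  shows "metrizable X P B \<or> cellular X P B"
proof -
  have con: "connected_ballean X P B" using assms(2) unfolding ordinal_ballean_def by (elim conjE)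
  obtain P' where P': "P' \<subseteq> P" "\<forall>\<alpha>\<in>P. \<exists>\<beta>\<in>P'. radius_le X B \<alpha> \<beta>"
     "well_order_on P' {(\<alpha>, \<beta>). \<alpha> \<in> P' \<and> \<beta> \<in> P' \<and> radius_le X B \<alpha> \<beta>}"
    using assms(2) unfolding ordinal_ballean_def by (elim conjE exE) blast
  show ?thesis
  proof (cases "\<exists>s::nat \<Rightarrow> 'p. (\<forall>k. s k \<in> P) \<and> (\<forall>a\<in>P. \<exists>k. radius_le X B a (s k))")
    case True
    then obtain s :: "nat \<Rightarrow> 'p" where s: "\<forall>k. s k \<in> P" "\<forall>a\<in>P. \<exists>k. radius_le X B a (s k)" by blast
    have "metrizable X P B" by (rule metr_case[OF assms(1) con s])
    then show ?thesis by blast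
  next
    case False
    have "cellular X P B" by (rule cell_case[OF assms(1) P' False])
    then show ?thesis by blast
  qed
qed

end
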